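(* Let $M\subset X$ be nonempty, $F:X\rightrightarrows Y$ with nonempty values, and $\bar x\in M\cap M'$ such that $F(\bar x)$ is $K$-sequentially compact and $\bar x$ is an ideal minimum for $F$ on $M$. Suppose there are $e\in K\setminus\{0\}$ and $\ell>0$ such that for all $u\in X\setminus M$ and $v\in M$, $$F(u)+\ell\|u-v\|e\subset F(v)+K.$$ Then $\bar x$ is an ideal minimum on $X$ for the set-valued map $G:X\rightrightarrows Y$, $G(x)=F(x)+\ell d_M(x)e$.
   Context: $X,Y$ are real normed spaces, $K\subset Y$ a pointed closed convex cone, $M'$ the set of accumulation points of $M$, $d_M(x)=\inf_{m\in M}\|x-m\|$. A nonempty $A\subset Y$ is $K$-sequentially compact if for every $(a_n)\subset A$ there is $(c_n)\subset K$ such that $(a_n-c_n)$ has a subsequence converging to an element of $A$. For nonempty $S\subset X$, $\bar x\in S$ is an ideal minimum for $F$ on $S$ if $F(\bar x)\not\subset F(x)+(Y\setminus -K)$ for all $x\in S\setminus\{\bar x\}$; "on $X$" means $S=X$. *)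

theory Defs
  imports "HOL-Analysis.Analysis"
begin

definition msum :: "'a::real_normed_vector set \<Rightarrow> 'a set \<Rightarrow> 'a set" where
  "msum A B = {a + b | a b. a \<in> A \<and> b \<in> B}"

definition pointed_closed_convex_cone :: "'a::real_normed_vector set \<Rightarrow> bool" where
  "pointed_closed_convex_cone K \<longleftrightarrow> convex_cone K \<and> closed K \<and> K \<inter> uminus ` K = {0}"

definition K_seq_compact :: "'a::real_normed_vector set \<Rightarrow> 'a set \<Rightarrow> bool" where
  "K_seq_compact K A \<longleftrightarrow> A \<noteq> {} \<and>
     (\<forall>a::nat \<Rightarrow> 'a. (\<forall>n. a n \<in> A) \<longrightarrow>
        (\<exists>c::nat \<Rightarrow> 'a. (\<forall>n. c n \<in> K) \<and>
           (\<exists>(r::nat \<Rightarrow> nat) y. strict_mono r \<and> y \<in> A \<and> ((\<lambda>n. a (r n) - c (r n)) \<longlonglongrightarrow> y))))"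

definition ideal_min :: "'b::real_normed_vector set \<Rightarrow> ('a \<Rightarrow> 'b set) \<Rightarrow> 'a set \<Rightarrow> 'a \<Rightarrow> bool" where
  "ideal_min K F S xb \<longleftrightarrow> xb \<in> S \<and>
     (\<forall>x \<in> S - {xb}. \<not> (F xb \<subseteq> msum (F x) (UNIV - uminus ` K)))"

end

theory Submission
  imports Defs
begin

lemma infdist_approx:
  assumes "A \<noteq> {}" "\<epsilon> > 0"
  shows "\<exists>a\<in>A. dist x a < infdist x A + \<epsilon>"
proof -
  have eq: "infdist x A = (INF a\<in>A. dist x a)" by (rule infdist_notempty[OF assms(1)])
  have bdd: "bdd_below ((\<lambda>a. dist x a) ` A)" by (rule bdd_belowI[of _ 0]) (erule imageE, simp)
  have "(INF a\<in>A. dist x a) < infdist x A + \<epsilon>" unfolding eq using assms(2) by linarith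
  thus ?thesis using cINF_less_iff[OF assms(1) bdd] by blast
qed

lemma near_point:
  assumes xbM: "xb \<in> M" and acc: "xb islimpt M" and "\<epsilon> > 0"
  shows "\<exists>v\<in>M. v \<noteq> xb \<and> dist x v < infdist x M + \<epsilon>"
proof -
  obtain m where m: "m \<in> M" "dist x m < infdist x M + \<epsilon>/2"
    using infdist_approx[of M "\<epsilon>/2" x] xbM assms by auto
  show ?thesis
  proof (cases "m = xb")
    case False thus ?thesis using m assms(3) by (intro bexI[of _ m]) auto
  next
    case True
    obtain v where v: "v \<in> M" "v \<noteq> xb" "dist v xb < \<epsilon>/2"
      using acc assms(3) unfolding islimpt_approachable by (meson half_gt_zero)
    have "dist x v \<le> dist x xb + dist v xb" by (metis dist_commute dist_triangle)
    thus ?thesis using v m True by (intro bexI[of _ v]) auto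
  qed
qed

theorem mainTheorem16:
  fixes K :: "'b::real_normed_vector set"
    and M :: "'a::real_normed_vector set"
    and F :: "'a \<Rightarrow> 'b set"
    and xb :: 'a and e :: 'b and l :: real
  assumes K: "pointed_closed_convex_cone K"
    and M: "M \<noteq> {}"
    and Fne: "\<And>x. F x \<noteq> {}"
    and xbM: "xb \<in> M" and xbacc: "xb islimpt M"
    and Fcomp: "K_seq_compact K (F xb)"
    and imin: "ideal_min K F M xb"
    and e: "e \<in> K - {0}" and l: "l > 0"
    and incl: "\<And>u v. u \<in> UNIV - M \<Longrightarrow> v \<in> M \<Longrightarrow>
                 msum (F u) {(l * norm (u - v)) *\<^sub>R e} \<subseteq> msum (F v) K"
  shows "ideal_min K (\<lambda>x. msum (F x) {(l * infdist x M) *\<^sub>R e}) UNIV xb"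
proof -
  have cc: "convex_cone K" using K unfolding pointed_closed_convex_cone_def by (elim conjE)
  have cK: "closed K" using K unfolding pointed_closed_convex_cone_def by (elim conjE)
  have Gxb: "msum (F xb) {(l * infdist xb M) *\<^sub>R e} = F xb"
    using xbM unfolding msum_def by simp
  have lb: "\<And>x w. w \<in> M - {xb} \<Longrightarrow> \<exists>y\<in>F xb. \<forall>z\<in>F w. z - y \<in> K"
  proof -
    fix x w assume w: "w \<in> M - {xb}"
    then obtain y where y: "y \<in> F xb" "y \<notin> msum (F w) (UNIV - uminus ` K)"
      using imin unfolding ideal_min_def by blast
    have "\<forall>z\<in>F w. z - y \<in> K"
    proof
      fix z assume z: "z \<in> F w"
      have "y - z \<in> uminus ` K"
      proof (rule ccontr)
        assume "y - z \<notin> uminus ` K"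
        hence "y \<in> msum (F w) (UNIV - uminus ` K)" unfolding msum_def using z
          by (intro CollectI exI[of _ z] exI[of _ "y - z"]) auto
        thus False using y by blast
      qed
      then obtain k where "k \<in> K" "y - z = - k" by blast
      thus "z - y \<in> K" by (metis minus_diff_eq minus_minus)
    qed
    thus "\<exists>y\<in>F xb. \<forall>z\<in>F w. z - y \<in> K" using y by blast
  qed
  have key: "\<exists>y\<in>F xb. \<forall>z\<in>F x. z + (l * infdist x M) *\<^sub>R e - y \<in> K" if x: "x \<noteq> xb" for x
  proof (cases "x \<in> M")
    case True
    thus ?thesis using lb[of x] x by simp
  next
    case False
    have "\<forall>n. \<exists>v. v \<in> M \<and> v \<noteq> xb \<and> dist x v < infdist x M + 1 / (real n + 1)"
    proof
      fix n :: nat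
      have "1 / (real n + 1) > 0" by simp
      thus "\<exists>v. v \<in> M \<and> v \<noteq> xb \<and> dist x v < infdist x M + 1 / (real n + 1)"
        using near_point[OF xbM xbacc] by blast
    qed
    then have "\<exists>v. \<forall>n. v n \<in> M \<and> v n \<noteq> xb \<and> dist x (v n) < infdist x M + 1 / (real n + 1)"
      by (rule choice)
    then obtain v where v: "\<And>n. v n \<in> M" "\<And>n. v n \<noteq> xb"
      "\<And>n. dist x (v n) < infdist x M + 1 / (real n + 1)" by blast
    have "\<forall>n. \<exists>y\<in>F xb. \<forall>z\<in>F x. z + (l * norm (x - v n)) *\<^sub>R e - y \<in> K"
    proof
      fix n
      obtain y where y: "y \<in> F xb" "\<forall>w\<in>F (v n). w - y \<in> K" using lb[of "v n"] v by auto
      have "\<forall>z\<in>F x. z + (l * norm (x - v n)) *\<^sub>R e - y \<in> K"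
      proof
        fix z assume z: "z \<in> F x"
        have "z + (l * norm (x - v n)) *\<^sub>R e \<in> msum (F x) {(l * norm (x - v n)) *\<^sub>R e}"
          unfolding msum_def using z by blast
        hence "z + (l * norm (x - v n)) *\<^sub>R e \<in> msum (F (v n)) K" using incl[of x "v n"] False v by blast
        then obtain w k where wk: "w \<in> F (v n)" "k \<in> K" "z + (l * norm (x - v n)) *\<^sub>R e = w + k"
          unfolding msum_def by blast
        have eq: "z + (l * norm (x - v n)) *\<^sub>R e - y = (w - y) + k" using wk by (simp add: algebra_simps)
        have "(w - y) + k \<in> K" using convex_cone_add[OF cc, of "w - y" k] y(2) wk by blast
        thus "z + (l * norm (x - v n)) *\<^sub>R e - y \<in> K" unfolding eq .
      qed
      thus "\<exists>y\<in>F xb. \<forall>z\<in>F x. z + (l * norm (x - v n)) *\<^sub>R e - y \<in> K" using y by blast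
    qed
    then have "\<exists>ys. \<forall>n. ys n \<in> F xb \<and> (\<forall>z\<in>F x. z + (l * norm (x - v n)) *\<^sub>R e - ys n \<in> K)"
      by (subst (asm) Bex_def) (rule choice)
    then obtain ys where ys: "\<And>n. ys n \<in> F xb"
      "\<And>n z. z \<in> F x \<Longrightarrow> z + (l * norm (x - v n)) *\<^sub>R e - ys n \<in> K"
      by blast
    obtain c r y where cry: "\<And>n. c n \<in> K" "strict_mono r" "y \<in> F xb"
      "(\<lambda>n. ys (r n) - c (r n)) \<longlonglongrightarrow> y"
    proof -
      have "\<forall>n. ys n \<in> F xb" using ys(1) by blast
      then have "\<exists>c::nat \<Rightarrow> 'b. (\<forall>n. c n \<in> K) \<and>
           (\<exists>(r::nat \<Rightarrow> nat) y. strict_mono r \<and> y \<in> F xb \<and> ((\<lambda>n. ys (r n) - c (r n)) \<longlonglongrightarrow> y))"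
        using Fcomp unfolding K_seq_compact_def by blast
      thus ?thesis using that by blast
    qed
    have dlim: "(\<lambda>n. norm (x - v n)) \<longlonglongrightarrow> infdist x M"
    proof (rule tendsto_sandwich[of "\<lambda>n. infdist x M" _ _ "\<lambda>n. infdist x M + 1 / (real n + 1)"])
      show "\<forall>\<^sub>F n in sequentially. infdist x M \<le> norm (x - v n)"
        using infdist_le[OF v(1)] by (simp add: dist_norm)
      show "\<forall>\<^sub>F n in sequentially. norm (x - v n) \<le> infdist x M + 1 / (real n + 1)"
        using v(3) by (simp add: dist_norm less_imp_le)
      show "(\<lambda>n. infdist x M) \<longlonglongrightarrow> infdist x M" by simp
      show "(\<lambda>n. infdist x M + 1 / (real n + 1)) \<longlonglongrightarrow> infdist x M"
        using tendsto_add[OF tendsto_const LIMSEQ_inverse_real_of_nat] 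
        by (simp add: inverse_eq_divide add.commute)
    qed
    have dlim2: "(\<lambda>n. norm (x - v (r n))) \<longlonglongrightarrow> infdist x M"
      using LIMSEQ_subseq_LIMSEQ[OF dlim cry(2)] by (simp add: o_def)
    have "\<forall>z\<in>F x. z + (l * infdist x M) *\<^sub>R e - y \<in> K"
    proof
      fix z assume z: "z \<in> F x"
      let ?s = "\<lambda>n. (z + (l * norm (x - v (r n))) *\<^sub>R e - ys (r n)) + c (r n)"
      have "\<forall>n. ?s n \<in> K" using convex_cone_add[OF cc ys(2)[OF z] cry(1)] by blast
      moreover have "?s \<longlonglongrightarrow> z + (l * infdist x M) *\<^sub>R e - y"
      proof -
        have "(\<lambda>n. z + (l * norm (x - v (r n))) *\<^sub>R e - (ys (r n) - c (r n)))
               \<longlonglongrightarrow> z + (l * infdist x M) *\<^sub>R e - y"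
          by (intro tendsto_intros dlim2 cry(4))
        thus ?thesis by (simp add: algebra_simps)
      qed
      ultimately show "z + (l * infdist x M) *\<^sub>R e - y \<in> K"
        using closed_sequentially[OF cK, of ?s "z + (l * infdist x M) *\<^sub>R e - y"] by blast
    qed
    thus ?thesis using cry(3) by blast
  qed
  show ?thesis
    unfolding ideal_min_def
  proof (intro conjI ballI)
    show "xb \<in> UNIV" by simp
    fix x assume "x \<in> UNIV - {xb}"
    then obtain y where y: "y \<in> F xb" "\<forall>z\<in>F x. z + (l * infdist x M) *\<^sub>R e - y \<in> K"
      using key by blast
    have "y \<notin> msum (msum (F x) {(l * infdist x M) *\<^sub>R e}) (UNIV - uminus ` K)"
    proof
      assume "y \<in> msum (msum (F x) {(l * infdist x M) *\<^sub>R e}) (UNIV - uminus ` K)"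
      then obtain g q where gq: "g \<in> msum (F x) {(l * infdist x M) *\<^sub>R e}" "q \<notin> uminus ` K"
        "y = g + q" unfolding msum_def by blast
      then obtain z where z: "z \<in> F x" "g = z + (l * infdist x M) *\<^sub>R e"
        unfolding msum_def by blast
      have inK: "z + (l * infdist x M) *\<^sub>R e - y \<in> K" using y(2) z(1) by blast
      have "q = - (z + (l * infdist x M) *\<^sub>R e - y)" using gq(3) z(2) by (simp add: algebra_simps)
      hence "q \<in> uminus ` K" using inK by (intro image_eqI)
      thus False using gq(2) by contradiction
    qed
    thus "\<not> msum (F xb) {(l * infdist xb M) *\<^sub>R e} \<subseteq> msum (msum (F x) {(l * infdist x M) *\<^sub>R e}) (UNIV - uminus ` K)"
      unfolding Gxb using y(1) by blast
  qed
qed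

end
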